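(* Let $h>0$, $\Omega\in\mathbb{R}$, $g<0$. Consider the discrete Gross–Pitaevskii lattice $$i\dot{\phi}_n+\frac{1}{h^2}(\phi_{n+1}-2\phi_n+\phi_{n-1})-\Omega^2(hn)^2\phi_n-g|\phi_n|^2\phi_n=0,\quad n\in\mathbb{Z},$$ with vanishing boundary conditions $\lim_{|n|\to\infty}\phi_n(t)=0$ for all $t\ge0$. Let the initial datum $\phi(0)$ have finite discrete variance, $V_d(0):=h\sum_{n\in\mathbb{Z}}(hn)^2|\phi_n(0)|^2<\infty$, and let $\phi\in C^1([0,\infty),l^2)$ be the corresponding global-in-time solution. Then $$V_d(t):=h\sum_{n\in\mathbb{Z}}(hn)^2|\phi_n(t)|^2<\infty\quad\text{for all } t>0.$$
   Context: $l^2$ is the space of complex sequences $u=(u_n)_{n\in\mathbb{Z}}$ with $\|u\|_{l^2}^2=h\sum_{n}|u_n|^2<\infty$. *)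

theory Defs
  imports "HOL-Analysis.Analysis"
begin

definition l2seq :: "(int \<Rightarrow> complex) \<Rightarrow> bool" where
  "l2seq u \<longleftrightarrow> (\<lambda>n. (cmod (u n))^2) summable_on UNIV"

definition l2norm :: "real \<Rightarrow> (int \<Rightarrow> complex) \<Rightarrow> real" where
  "l2norm h u = sqrt (h * (\<Sum>\<^sub>\<infinity>n. (cmod (u n))^2))"

definition C1_l2 :: "real \<Rightarrow> (real \<Rightarrow> int \<Rightarrow> complex) \<Rightarrow> (real \<Rightarrow> int \<Rightarrow> complex) \<Rightarrow> bool" where
  "C1_l2 h \<phi> \<phi>' \<longleftrightarrow>
     (\<forall>t\<ge>0. l2seq (\<phi> t) \<and> l2seq (\<phi>' t)) \<and>
     (\<forall>t\<ge>0. ((\<lambda>s. l2norm h (\<lambda>n. \<phi> s n - \<phi> t n)) \<longlongrightarrow> 0) (at t within {0..})) \<and>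
     (\<forall>t\<ge>0. ((\<lambda>s. l2norm h (\<lambda>n. (\<phi> s n - \<phi> t n) / of_real (s - t) - \<phi>' t n))
                 \<longlongrightarrow> 0) (at t within {0..})) \<and>
     (\<forall>t\<ge>0. ((\<lambda>s. l2norm h (\<lambda>n. \<phi>' s n - \<phi>' t n)) \<longlongrightarrow> 0) (at t within {0..}))"

definition finite_variance :: "real \<Rightarrow> (int \<Rightarrow> complex) \<Rightarrow> bool" where
  "finite_variance h u \<longleftrightarrow> (\<lambda>n. h * (h * of_int n)^2 * (cmod (u n))^2) summable_on UNIV"

end

theory Submission
  imports Defs
begin

lemma l2seq_add: assumes "l2seq u" "l2seq v" shows "l2seq (\<lambda>n. u n + v n)"
proof -
  have "(\<lambda>n. 2*(cmod (u n))^2 + 2*(cmod (v n))^2) summable_on UNIV"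
    using assms unfolding l2seq_def by (intro summable_on_add summable_on_cmult_right)
  moreover have "(cmod (u n + v n))^2 \<le> 2*(cmod (u n))^2 + 2*(cmod (v n))^2" for n
  proof -
    have "cmod (u n + v n) \<le> cmod (u n) + cmod (v n)" by (rule norm_triangle_ineq)
    hence "(cmod (u n + v n))^2 \<le> (cmod (u n) + cmod (v n))^2" by (simp add: power_mono)
    also have "\<dots> \<le> 2*(cmod (u n))^2 + 2*(cmod (v n))^2"
      by (smt (verit) sum_squares_ge_zero power2_sum power2_diff zero_le_power2)
    finally show ?thesis .
  qed
  ultimately show ?thesis unfolding l2seq_def
    by (rule summable_on_comparison_test) auto
qed

lemma l2seq_scale: assumes "l2seq u" shows "l2seq (\<lambda>n. c * u n)"
proof -
  have "(\<lambda>n. (cmod c)^2 * (cmod (u n))^2) summable_on UNIV"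
    using assms unfolding l2seq_def by (intro summable_on_cmult_right)
  thus ?thesis unfolding l2seq_def by (simp add: norm_mult power_mult_distrib)
qed

lemma l2seq_quot: assumes "l2seq u" "l2seq v" "l2seq w"
  shows "l2seq (\<lambda>n. (u n - v n) / c - w n)"
proof -
  have "l2seq (\<lambda>n. inverse c * (u n + (-1) * v n) + (-1) * w n)"
    by (intro l2seq_add l2seq_scale assms)
  thus ?thesis by (simp add: field_simps)
qed

lemma l2_coord: assumes "l2seq u" shows "(cmod (u n))^2 \<le> (\<Sum>\<^sub>\<infinity>n. (cmod (u n))^2)"
proof -
  have "sum (\<lambda>n. (cmod (u n))^2) {n} \<le> (\<Sum>\<^sub>\<infinity>n. (cmod (u n))^2)"
    using assms unfolding l2seq_def by (intro finite_sum_le_infsum) auto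
  thus ?thesis by simp
qed

lemma l2_coord_norm: assumes "l2seq u" "h > 0" shows "cmod (u n) \<le> l2norm h u / sqrt h"
proof -
  have "cmod (u n) = sqrt ((cmod (u n))^2)" by simp
  also have "\<dots> \<le> sqrt (\<Sum>\<^sub>\<infinity>n. (cmod (u n))^2)" using l2_coord[OF assms(1)] real_sqrt_le_mono by blast
  also have "\<dots> = l2norm h u / sqrt h" using assms(2) unfolding l2norm_def
    by (simp add: real_sqrt_mult)
  finally show ?thesis .
qed

lemma coord_lim:
  assumes h: "h > 0" and C: "C1_l2 h \<phi> \<phi>'" and t: "t \<ge> 0"
  shows "((\<lambda>s. (\<phi> s n - \<phi> t n) / of_real (s - t)) \<longlongrightarrow> \<phi>' t n) (at t within {0..})"
proof -
  let ?q = "\<lambda>s m. (\<phi> s m - \<phi> t m) / of_real (s - t) - \<phi>' t m"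
  have L: "((\<lambda>s. l2norm h (?q s)) \<longlongrightarrow> 0) (at t within {0..})"
    using C t unfolding C1_l2_def by blast
  have L2: "((\<lambda>s. l2norm h (?q s) / sqrt h) \<longlongrightarrow> 0) (at t within {0..})"
    using tendsto_divide_zero[OF L] by simp
  have ev: "eventually (\<lambda>s. norm (?q s n) \<le> l2norm h (?q s) / sqrt h) (at t within {0..})"
    unfolding eventually_at_filter
  proof (rule always_eventually, intro allI impI)
    fix s :: real assume "s \<in> {0..}"
    hence "l2seq (?q s)" using C t unfolding C1_l2_def by (intro l2seq_quot) auto
    thus "norm (?q s n) \<le> l2norm h (?q s) / sqrt h" using l2_coord_norm h by simp
  qed
  have "((\<lambda>s. ?q s n) \<longlongrightarrow> 0) (at t within {0..})"
    by (rule Lim_null_comparison[OF ev L2])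
  thus ?thesis by (rule LIM_zero_cancel)
qed

lemma coord_deriv:
  assumes h: "h > 0" and C: "C1_l2 h \<phi> \<phi>'" and t: "t \<ge> 0"
  shows "((\<lambda>s. Re (\<phi> s n)) has_real_derivative Re (\<phi>' t n)) (at t within {0..})"
    and "((\<lambda>s. Im (\<phi> s n)) has_real_derivative Im (\<phi>' t n)) (at t within {0..})"
proof -
  note l = coord_lim[OF assms, of n]
  have "((\<lambda>s. Re ((\<phi> s n - \<phi> t n) / of_real (s - t))) \<longlongrightarrow> Re (\<phi>' t n)) (at t within {0..})"
    by (rule tendsto_Re[OF l])
  thus "((\<lambda>s. Re (\<phi> s n)) has_real_derivative Re (\<phi>' t n)) (at t within {0..})"
    unfolding has_field_derivative_iff by (simp add: Re_divide_of_real)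
  have "((\<lambda>s. Im ((\<phi> s n - \<phi> t n) / of_real (s - t))) \<longlongrightarrow> Im (\<phi>' t n)) (at t within {0..})"
    by (rule tendsto_Im[OF l])
  thus "((\<lambda>s. Im (\<phi> s n)) has_real_derivative Im (\<phi>' t n)) (at t within {0..})"
    unfolding has_field_derivative_iff by (simp add: Im_divide_of_real)
qed

definition J :: "(int \<Rightarrow> complex) \<Rightarrow> int \<Rightarrow> real" where
  "J u n = Im (u n) * Re (u (n+1)) - Re (u n) * Im (u (n+1))"

lemma A_deriv:
  assumes h: "h > 0" and C: "C1_l2 h \<phi> \<phi>'" and t: "t \<ge> 0"
    and E: "\<forall>t\<ge>0. \<forall>n::int.
           \<i> * \<phi>' t n + (\<phi> t (n + 1) - 2 * \<phi> t n + \<phi> t (n - 1)) / (of_real h)^2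
           - of_real (\<Omega>^2 * (h * of_int n)^2) * \<phi> t n
           - of_real g * (of_real (cmod (\<phi> t n)))^2 * \<phi> t n = 0"
  shows "((\<lambda>s. (cmod (\<phi> s n))^2) has_real_derivative (2 / h^2) * (J (\<phi> t) n - J (\<phi> t) (n-1))) (at t within {0..})"
proof -
  have d0: "((\<lambda>s. Re (\<phi> s n) * Re (\<phi> s n) + Im (\<phi> s n) * Im (\<phi> s n)) has_real_derivative
     Re (\<phi>' t n) * Re (\<phi> t n) + Re (\<phi>' t n) * Re (\<phi> t n) + (Im (\<phi>' t n) * Im (\<phi> t n) + Im (\<phi>' t n) * Im (\<phi> t n))) (at t within {0..})"
    using coord_deriv[OF assms(1-3), of n]
    by (intro DERIV_add DERIV_mult) auto
  have d: "((\<lambda>s. (Re (\<phi> s n))^2 + (Im (\<phi> s n))^2) has_real_derivative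
     2 * Re (\<phi> t n) * Re (\<phi>' t n) + 2 * Im (\<phi> t n) * Im (\<phi>' t n)) (at t within {0..})"
    using d0 by (simp add: power2_eq_square algebra_simps)
  have e: "\<i> * \<phi>' t n + (\<phi> t (n + 1) - 2 * \<phi> t n + \<phi> t (n - 1)) / (of_real h)^2
           - of_real (\<Omega>^2 * (h * of_int n)^2) * \<phi> t n
           - of_real g * (of_real (cmod (\<phi> t n)))^2 * \<phi> t n = 0" using E t by blast
  define r where "r = \<Omega>^2 * (h * of_int n)^2 + g * (cmod (\<phi> t n))^2"
  have e2: "\<i> * \<phi>' t n + (\<phi> t (n + 1) - 2 * \<phi> t n + \<phi> t (n - 1)) / of_real (h^2)
           - of_real r * \<phi> t n = 0" using e unfolding r_def by (simp add: algebra_simps)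
  have eR: "- Im (\<phi>' t n) + (Re (\<phi> t (n + 1)) - 2 * Re (\<phi> t n) + Re (\<phi> t (n - 1))) / h^2 - r * Re (\<phi> t n) = 0"
    using arg_cong[OF e2, of Re] by (simp add: Re_divide_of_real)
  have eI: "Re (\<phi>' t n) + (Im (\<phi> t (n + 1)) - 2 * Im (\<phi> t n) + Im (\<phi> t (n - 1))) / h^2 - r * Im (\<phi> t n) = 0"
    using arg_cong[OF e2, of Im] by (simp add: Im_divide_of_real)
  have "2 * Re (\<phi> t n) * Re (\<phi>' t n) + 2 * Im (\<phi> t n) * Im (\<phi>' t n) = (2 / h^2) * (J (\<phi> t) n - J (\<phi> t) (n-1))"
  proof -
    have hh: "h^2 \<noteq> 0" using h by simp
    from eR have q: "Im (\<phi>' t n) = (Re (\<phi> t (n + 1)) - 2 * Re (\<phi> t n) + Re (\<phi> t (n - 1))) / h^2 - r * Re (\<phi> t n)" by simp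
    from eI have p: "Re (\<phi>' t n) = - (Im (\<phi> t (n + 1)) - 2 * Im (\<phi> t n) + Im (\<phi> t (n - 1))) / h^2 + r * Im (\<phi> t n)" by (simp add: field_simps diff_divide_distrib add_divide_distrib)
    show ?thesis unfolding p q J_def using hh by (simp add: field_simps)
  qed
  with d show ?thesis by (simp add: cmod_power2)
qed

definition rho :: "int \<Rightarrow> int \<Rightarrow> real" where
  "rho K n = max 0 (min (of_int \<bar>n\<bar>) (of_int (K - \<bar>n\<bar>)))"

lemma rho_nonneg: "rho K n \<ge> 0" unfolding rho_def by simp
lemma rho_Lip: "rho K (n+1) \<le> rho K n + 1" "rho K n \<le> rho K (n+1) + 1"
  unfolding rho_def by (auto simp: abs_if)
lemma rho_end: "K \<ge> 0 \<Longrightarrow> rho K (-K) = 0" "K \<ge> 0 \<Longrightarrow> rho K (K+1) = 0"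
  unfolding rho_def by auto
lemma rho_le: "rho K n \<le> of_int \<bar>n\<bar>" unfolding rho_def by auto
lemma rho_mid: "\<bar>n\<bar> \<le> N \<Longrightarrow> rho (2*N) n = of_int \<bar>n\<bar>" unfolding rho_def by auto

lemma sum_shift:
  fixes f :: "int \<Rightarrow> real" assumes "K \<ge> 0"
  shows "(\<Sum>n\<in>{-K..K}. f (n-1)) = f (-K-1) + (\<Sum>n\<in>{-K..K}. f n) - f K"
proof -
  have "(\<Sum>n\<in>{-K..K}. f (n-1)) = (\<Sum>n\<in>(\<lambda>n. n-1) ` {-K..K}. f n)"
    by (subst sum.reindex) (auto simp: inj_on_def)
  also have "(\<lambda>n. n-1) ` {-K..K} = insert (-K-1) {-K..K-1}"
  proof (rule set_eqI, rule iffI)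
    fix x assume "x \<in> insert (-K-1) {-K..K-1}"
    hence "x + 1 \<in> {-K..K}" "x = (x+1) - 1" using assms by auto
    thus "x \<in> (\<lambda>n. n-1) ` {-K..K}" by (metis image_eqI)
  qed auto
  also have "(\<Sum>n\<in>insert (-K-1) {-K..K-1}. f n) = f (-K-1) + (\<Sum>n\<in>{-K..K-1}. f n)"
    by simp
  also have "{-K..K} = insert K {-K..K-1}" using assms by auto
  hence "(\<Sum>n\<in>{-K..K}. f n) = f K + (\<Sum>n\<in>{-K..K-1}. f n)" by simp
  ultimately show ?thesis by simp
qed

lemma J_bound: "\<bar>J u n\<bar> \<le> cmod (u n) * cmod (u (n+1))"
proof -
  have "J u n = Im (cnj (u (n+1)) * u n)" unfolding J_def by simp
  also have "\<bar>\<dots>\<bar> \<le> cmod (cnj (u (n+1)) * u n)" by (rule abs_Im_le_cmod)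
  also have "\<dots> = cmod (u n) * cmod (u (n+1))" by (simp add: norm_mult)
  finally show ?thesis .
qed

lemma term_bound:
  "((rho K n)^2 - (rho K (n+1))^2) * J u n \<le>
     (rho K n)^2 * (cmod (u n))^2 + 3/2 * (cmod (u (n+1)))^2 + 1/2 * (cmod (u n))^2"
proof -
  define a where "a = rho K n" define b where "b = rho K (n+1)"
  define x where "x = cmod (u n)" define y where "y = cmod (u (n+1))"
  have a0: "a \<ge> 0" "b \<ge> 0" unfolding a_def b_def by (auto simp: rho_nonneg)
  have ab: "b \<le> a + 1" "a \<le> b + 1" unfolding a_def b_def using rho_Lip by auto
  have xy: "x \<ge> 0" "y \<ge> 0" unfolding x_def y_def by auto
  have Jb: "\<bar>J u n\<bar> \<le> x * y" unfolding x_def y_def by (rule J_bound)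
  have "\<bar>a^2 - b^2\<bar> \<le> 2*a + 1"
  proof -
    have "a^2 - b^2 = (a - b) * (a + b)" by (simp add: power2_eq_square algebra_simps)
    hence "\<bar>a^2 - b^2\<bar> = \<bar>a - b\<bar> * (a + b)" using a0 by (simp add: abs_mult)
    also have "\<dots> \<le> 1 * (a + b)" using ab a0 by (intro mult_right_mono) auto
    finally show ?thesis using ab by simp
  qed
  have "(a^2 - b^2) * J u n \<le> \<bar>a^2 - b^2\<bar> * \<bar>J u n\<bar>" by (simp add: abs_mult[symmetric])
  also have "\<dots> \<le> (2*a+1) * (x*y)" using \<open>\<bar>a^2 - b^2\<bar> \<le> 2*a + 1\<close> Jb
    by (intro mult_mono) auto
  also have "\<dots> \<le> a^2 * x^2 + 3/2 * y^2 + 1/2 * x^2"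
  proof -
    have "0 \<le> (a*x - y)^2" by simp
    moreover have "0 \<le> (x - y)^2" by simp
    ultimately show ?thesis by (simp add: power2_eq_square algebra_simps)
  qed
  finally show ?thesis unfolding a_def b_def x_def y_def .
qed

lemma fin_le_S: assumes "l2seq u" "finite F"
  shows "(\<Sum>n\<in>F. (cmod (u n))^2) \<le> (\<Sum>\<^sub>\<infinity>n. (cmod (u n))^2)"
  using assms unfolding l2seq_def by (intro finite_sum_le_infsum) auto

lemma flux_bound:
  assumes u: "l2seq u" and K: "K \<ge> 0"
  shows "(\<Sum>n\<in>{-K..K}. ((rho K n)^2 - (rho K (n+1))^2) * J u n)
     \<le> (\<Sum>n\<in>{-K..K}. (rho K n)^2 * (cmod (u n))^2) + 2 * (\<Sum>\<^sub>\<infinity>n. (cmod (u n))^2)"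
proof -
  let ?S = "(\<Sum>\<^sub>\<infinity>n. (cmod (u n))^2)"
  have "(\<Sum>n\<in>{-K..K}. ((rho K n)^2 - (rho K (n+1))^2) * J u n) \<le>
     (\<Sum>n\<in>{-K..K}. (rho K n)^2 * (cmod (u n))^2 + 3/2 * (cmod (u (n+1)))^2 + 1/2 * (cmod (u n))^2)"
    by (intro sum_mono term_bound)
  also have "\<dots> = (\<Sum>n\<in>{-K..K}. (rho K n)^2 * (cmod (u n))^2) + 3/2 * (\<Sum>n\<in>{-K..K}. (cmod (u (n+1)))^2)
      + 1/2 * (\<Sum>n\<in>{-K..K}. (cmod (u n))^2)"
    by (simp add: sum.distrib sum_distrib_left)
  also have "(\<Sum>n\<in>{-K..K}. (cmod (u (n+1)))^2) = (\<Sum>n\<in>(\<lambda>n. n+1) ` {-K..K}. (cmod (u n))^2)"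
    by (subst sum.reindex) (auto simp: inj_on_def)
  also have "\<dots> \<le> ?S" using u by (intro fin_le_S) auto
  hence "3/2 * (\<Sum>n\<in>(\<lambda>n. n+1) ` {-K..K}. (cmod (u n))^2) \<le> 3/2 * ?S" by simp
  moreover have "1/2 * (\<Sum>n\<in>{-K..K}. (cmod (u n))^2) \<le> 1/2 * ?S" using fin_le_S[OF u] by simp
  ultimately show ?thesis by simp
qed

lemma mass_local:
  assumes h: "h > 0" and C: "C1_l2 h \<phi> \<phi>'" and s0: "s0 \<ge> 0"
  shows "\<exists>e>0. \<forall>s\<ge>0. dist s s0 < e \<longrightarrow>
     (\<Sum>\<^sub>\<infinity>n. (cmod (\<phi> s n))^2) \<le> 2 * (\<Sum>\<^sub>\<infinity>n. (cmod (\<phi> s0 n))^2) + 2 / h"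
proof -
  have L: "((\<lambda>s. l2norm h (\<lambda>n. \<phi> s n - \<phi> s0 n)) \<longlongrightarrow> 0) (at s0 within {0..})"
    using C s0 unfolding C1_l2_def by blast
  have "eventually (\<lambda>s. dist (l2norm h (\<lambda>n. \<phi> s n - \<phi> s0 n)) 0 < 1) (at s0 within {0..})"
    using L by (rule tendstoD) simp
  then obtain e where e: "e > 0" and P: "\<forall>s\<in>{0..}. s \<noteq> s0 \<and> dist s s0 < e \<longrightarrow>
      dist (l2norm h (\<lambda>n. \<phi> s n - \<phi> s0 n)) 0 < 1"
    unfolding eventually_at by blast
  have S0: "0 \<le> (\<Sum>\<^sub>\<infinity>n. (cmod (\<phi> s0 n))^2)" by (intro infsum_nonneg) auto
  show ?thesis
  proof (intro exI[of _ e] conjI allI impI e)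
    fix s :: real assume s: "s \<ge> 0" "dist s s0 < e"
    show "(\<Sum>\<^sub>\<infinity>n. (cmod (\<phi> s n))^2) \<le> 2 * (\<Sum>\<^sub>\<infinity>n. (cmod (\<phi> s0 n))^2) + 2 / h"
    proof (cases "s = s0")
      case True thus ?thesis using S0 h by simp
    next
      case False
      let ?d = "\<lambda>n. \<phi> s n - \<phi> s0 n"
      have "l2norm h ?d < 1" using P s False by auto
      hence "h * (\<Sum>\<^sub>\<infinity>n. (cmod (?d n))^2) < 1" unfolding l2norm_def by simp
      hence D: "(\<Sum>\<^sub>\<infinity>n. (cmod (?d n))^2) < 1 / h" using h by (simp add: field_simps mult.commute)
      have l1: "l2seq (\<phi> s)" "l2seq (\<phi> s0)" using C s s0 unfolding C1_l2_def by auto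
      have l3: "l2seq ?d" using l2seq_add[OF l1(1) l2seq_scale[OF l1(2), of "-1"]] by simp
      have "(\<Sum>\<^sub>\<infinity>n. (cmod (\<phi> s n))^2) \<le> (\<Sum>\<^sub>\<infinity>n. 2 * (cmod (\<phi> s0 n))^2 + 2 * (cmod (?d n))^2)"
      proof (rule infsum_mono)
        show "(\<lambda>n. (cmod (\<phi> s n))^2) summable_on UNIV" using l1 unfolding l2seq_def by simp
        show "(\<lambda>n. 2 * (cmod (\<phi> s0 n))^2 + 2 * (cmod (?d n))^2) summable_on UNIV"
          using l1 l3 unfolding l2seq_def by (intro summable_on_add summable_on_cmult_right)
        fix n
        have "cmod (\<phi> s n) \<le> cmod (\<phi> s0 n) + cmod (?d n)"
          by (metis diff_add_cancel norm_triangle_ineq add.commute)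
        hence "(cmod (\<phi> s n))^2 \<le> (cmod (\<phi> s0 n) + cmod (?d n))^2" by (simp add: power_mono)
        also have "\<dots> \<le> 2 * (cmod (\<phi> s0 n))^2 + 2 * (cmod (?d n))^2"
          by (smt (verit) sum_squares_ge_zero power2_sum power2_diff zero_le_power2)
        finally show "(cmod (\<phi> s n))^2 \<le> 2 * (cmod (\<phi> s0 n))^2 + 2 * (cmod (?d n))^2" .
      qed
      also have "\<dots> = 2 * (\<Sum>\<^sub>\<infinity>n. (cmod (\<phi> s0 n))^2) + 2 * (\<Sum>\<^sub>\<infinity>n. (cmod (?d n))^2)"
        using l1 l3 unfolding l2seq_def
        by (subst infsum_add) (auto intro: summable_on_cmult_right simp: infsum_cmult_right)
      also have "\<dots> \<le> 2 * (\<Sum>\<^sub>\<infinity>n. (cmod (\<phi> s0 n))^2) + 2 / h" using D by simp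
      finally show ?thesis .
    qed
  qed
qed

lemma mass_bound:
  assumes h: "h > 0" and C: "C1_l2 h \<phi> \<phi>'"
  shows "\<exists>B\<ge>0. \<forall>s\<in>{0..T}. (\<Sum>\<^sub>\<infinity>n. (cmod (\<phi> s n))^2) \<le> B"
proof -
  let ?S = "\<lambda>s. (\<Sum>\<^sub>\<infinity>n. (cmod (\<phi> s n))^2)"
  have "\<forall>s0\<in>{0..T}. \<exists>e>0. \<forall>s\<ge>0. dist s s0 < e \<longrightarrow> ?S s \<le> 2 * ?S s0 + 2 / h"
    using mass_local[OF h C] by auto
  then obtain e where e: "\<forall>s0\<in>{0..T}. e s0 > 0 \<and> (\<forall>s\<ge>0. dist s s0 < e s0 \<longrightarrow> ?S s \<le> 2 * ?S s0 + 2 / h)"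
    by metis
  have cov: "{0..T} \<subseteq> (\<Union>c\<in>{0..T}. ball c (e c))" using e by force
  obtain C' where C': "C' \<subseteq> {0..T}" "finite C'" "{0..T} \<subseteq> (\<Union>c\<in>C'. ball c (e c))"
    using compactE_image[OF compact_Icc[of 0 T] _ cov] by blast
  have nn: "0 \<le> 2 * ?S c + 2 / h" for c
  proof -
    have "0 \<le> ?S c" by (intro infsum_nonneg) auto
    thus ?thesis using h by simp
  qed
  show ?thesis
  proof (intro exI[of _ "\<Sum>c\<in>C'. 2 * ?S c + 2 / h"] conjI ballI)
    show "0 \<le> (\<Sum>c\<in>C'. 2 * ?S c + 2 / h)" using nn by (intro sum_nonneg) auto
    fix s assume s: "s \<in> {0..T}"
    then obtain c where c: "c \<in> C'" "s \<in> ball c (e c)" using C' by blast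
    have "?S s \<le> 2 * ?S c + 2 / h" using e c C' s by (auto simp: dist_commute)
    also have "\<dots> \<le> (\<Sum>c\<in>C'. 2 * ?S c + 2 / h)"
      using nn c C' by (intro member_le_sum) auto
    finally show "?S s \<le> (\<Sum>c\<in>C'. 2 * ?S c + 2 / h)" .
  qed
qed

lemma W_bound:
  assumes h: "h > 0" and C: "C1_l2 h \<phi> \<phi>'" and t: "t \<ge> 0" and K: "K \<ge> 0"
    and Eq: "\<forall>t\<ge>0. \<forall>n::int.
           \<i> * \<phi>' t n + (\<phi> t (n + 1) - 2 * \<phi> t n + \<phi> t (n - 1)) / (of_real h)^2
           - of_real (\<Omega>^2 * (h * of_int n)^2) * \<phi> t n
           - of_real g * (of_real (cmod (\<phi> t n)))^2 * \<phi> t n = 0"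
    and B: "\<forall>s\<in>{0..t}. (\<Sum>\<^sub>\<infinity>n. (cmod (\<phi> s n))^2) \<le> B"
  shows "(\<Sum>n\<in>{-K..K}. (rho K n)^2 * (cmod (\<phi> t n))^2)
     \<le> ((\<Sum>n\<in>{-K..K}. (rho K n)^2 * (cmod (\<phi> 0 n))^2) + 2 * B) * exp ((2 / h^2) * t)"
proof -
  define c where "c = 2 / h^2"
  define W where "W s = (\<Sum>n\<in>{-K..K}. (rho K n)^2 * (cmod (\<phi> s n))^2)" for s
  define D where "D s = (\<Sum>n\<in>{-K..K}. (rho K n)^2 * (c * (J (\<phi> s) n - J (\<phi> s) (n-1))))" for s
  have c0: "c > 0" unfolding c_def using h by simp
  have dW: "(W has_real_derivative D s) (at s within {0..})" if s: "s \<ge> 0" for s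
    unfolding W_def D_def c_def
    by (intro DERIV_sum DERIV_cmult A_deriv[OF h C s Eq])
  have DW: "D s \<le> c * (W s + 2 * B)" if s: "s \<in> {0..t}" for s
  proof -
    let ?w = "\<lambda>n. (rho K n)^2" let ?J = "J (\<phi> s)"
    have "(\<Sum>n\<in>{-K..K}. ?w n * ?J (n-1)) = (\<Sum>n\<in>{-K..K}. (\<lambda>m. ?w (m+1) * ?J m) (n-1))" by simp
    also have "\<dots> = ?w (-K) * ?J (-K-1) + (\<Sum>n\<in>{-K..K}. ?w (n+1) * ?J n) - ?w (K+1) * ?J K"
      using sum_shift[OF K, of "\<lambda>m. ?w (m+1) * ?J m"] by simp
    also have "\<dots> = (\<Sum>n\<in>{-K..K}. ?w (n+1) * ?J n)" using rho_end[OF K] by simp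
    finally have sh: "(\<Sum>n\<in>{-K..K}. ?w n * ?J (n-1)) = (\<Sum>n\<in>{-K..K}. ?w (n+1) * ?J n)" .
    have "D s = c * ((\<Sum>n\<in>{-K..K}. ?w n * ?J n) - (\<Sum>n\<in>{-K..K}. ?w n * ?J (n-1)))"
      unfolding D_def by (simp add: sum_distrib_left sum_subtractf algebra_simps)
    also have "\<dots> = c * (\<Sum>n\<in>{-K..K}. (?w n - ?w (n+1)) * ?J n)"
      unfolding sh by (simp add: sum_subtractf algebra_simps)
    also have "\<dots> \<le> c * (W s + 2 * (\<Sum>\<^sub>\<infinity>n. (cmod (\<phi> s n))^2))"
      unfolding W_def using c0 flux_bound[OF _ K, of "\<phi> s"] C s unfolding C1_l2_def
      by (intro mult_left_mono) auto
    also have "\<dots> \<le> c * (W s + 2 * B)" using B s c0 by (intro mult_left_mono) auto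
    finally show ?thesis .
  qed
  define G where "G s = (W s + 2 * B) * exp (- c * s)" for s
  have dG: "(G has_real_derivative (D s * exp (- c * s) + (W s + 2 * B) * (exp (- c * s) * (- c)))) (at s within {0..})"
    if "s \<ge> 0" for s
  proof -
    have e: "((\<lambda>s. exp (- c * s)) has_real_derivative exp (- c * s) * (- c)) (at s within {0..})"
      by (auto intro!: derivative_eq_intros)
    have "((\<lambda>s. W s + 2 * B) has_real_derivative D s + 0) (at s within {0..})"
      by (intro DERIV_add dW[OF that] DERIV_const)
    from DERIV_mult[OF this e] show ?thesis unfolding G_def by (simp add: algebra_simps)
  qed
  have "G t \<le> G 0"
  proof (rule DERIV_nonpos_imp_decreasing_open[OF t])
    fix x assume x: "0 < x" "x < t"
    have "at x within {0..} = at x" by (rule at_within_interior) (use x in auto)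
    hence "DERIV G x :> D x * exp (- c * x) + (W x + 2 * B) * (exp (- c * x) * (- c))"
      using dG[of x] x by simp
    moreover have "D x * exp (- c * x) + (W x + 2 * B) * (exp (- c * x) * (- c)) \<le> 0"
    proof -
      have "D x * exp (- c * x) \<le> c * (W x + 2 * B) * exp (- c * x)"
        using DW[of x] x by (intro mult_right_mono) auto
      thus ?thesis by (simp add: algebra_simps)
    qed
    ultimately show "\<exists>y. DERIV G x :> y \<and> y \<le> 0" by blast
  next
    show "continuous_on {0..t} G"
      unfolding continuous_on_eq_continuous_within
    proof
      fix x assume x: "x \<in> {0..t}"
      have "continuous (at x within {0..}) G" using dG[of x] x by (auto intro: DERIV_continuous)
      thus "continuous (at x within {0..t}) G" by (rule continuous_within_subset) auto
    qed
  qed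
  hence "(W t + 2 * B) * exp (- c * t) \<le> W 0 + 2 * B" unfolding G_def by simp
  hence "W t + 2 * B \<le> (W 0 + 2 * B) * exp (c * t)"
    by (simp add: exp_minus field_simps)
  moreover have "B \<ge> 0"
  proof -
    have "0 \<le> (\<Sum>\<^sub>\<infinity>n. (cmod (\<phi> 0 n))^2)" by (intro infsum_nonneg) auto
    also have "\<dots> \<le> B" using B t by auto
    finally show ?thesis .
  qed
  ultimately show ?thesis unfolding W_def c_def by simp
qed

theorem mainTheorem3:
  fixes h \<Omega> g :: real
    and \<phi> \<phi>' :: "real \<Rightarrow> int \<Rightarrow> complex"
  assumes "h > 0" and "g < 0"
    and "C1_l2 h \<phi> \<phi>'"
    and "\<forall>t\<ge>0. \<forall>n::int.
           \<i> * \<phi>' t n + (\<phi> t (n + 1) - 2 * \<phi> t n + \<phi> t (n - 1)) / (of_real h)^2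
           - of_real (\<Omega>^2 * (h * of_int n)^2) * \<phi> t n
           - of_real g * (of_real (cmod (\<phi> t n)))^2 * \<phi> t n = 0"
    and "\<forall>t\<ge>0. (\<phi> t \<longlongrightarrow> 0) at_top \<and> (\<phi> t \<longlongrightarrow> 0) at_bot"
    and "finite_variance h (\<phi> 0)"
  shows "\<forall>t>0. finite_variance h (\<phi> t)"
proof (intro allI impI)
  fix t :: real assume t: "t > 0"
  note h = assms(1) and C = assms(3) and Eq = assms(4)
  let ?A = "\<lambda>s n. (cmod (\<phi> s n))^2"
  obtain B where B: "B \<ge> 0" "\<forall>s\<in>{0..t}. (\<Sum>\<^sub>\<infinity>n. ?A s n) \<le> B"
    using mass_bound[OF h C, of t] by blast
  have h3: "h^3 \<noteq> 0" using h by simp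
  have eqv: "(\<lambda>n. h * (h * of_int n)^2 * ?A s n) = (\<lambda>n. h^3 * ((of_int n)^2 * ?A s n))" for s
    by (rule ext) (simp add: power2_eq_square power3_eq_cube)
  have S0: "(\<lambda>n. (of_int n)^2 * ?A 0 n) summable_on UNIV"
    using assms(6) unfolding finite_variance_def eqv summable_on_cmult_right'[OF h3] .
  define V0 where "V0 = (\<Sum>\<^sub>\<infinity>n. (of_int n)^2 * ?A 0 n)"
  define M where "M = (V0 + 2 * B) * exp ((2 / h^2) * t)"
  have bnd: "(\<Sum>n\<in>{-N..N}. (of_int n)^2 * ?A t n) \<le> M" if N: "N \<ge> 0" for N :: int
  proof -
    define K where "K = 2 * N"
    have K: "K \<ge> 0" using N unfolding K_def by simp
    have "(\<Sum>n\<in>{-N..N}. (of_int n)^2 * ?A t n) = (\<Sum>n\<in>{-N..N}. (rho K n)^2 * ?A t n)"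
      by (intro sum.cong refl) (auto simp: K_def rho_mid)
    also have "\<dots> \<le> (\<Sum>n\<in>{-K..K}. (rho K n)^2 * ?A t n)"
      by (intro sum_mono2) (auto simp: K_def)
    also have "\<dots> \<le> ((\<Sum>n\<in>{-K..K}. (rho K n)^2 * ?A 0 n) + 2 * B) * exp ((2 / h^2) * t)"
      using t B by (intro W_bound[OF h C _ K Eq]) auto
    also have "\<dots> \<le> M" unfolding M_def
    proof (intro mult_right_mono add_right_mono)
      have "(\<Sum>n\<in>{-K..K}. (rho K n)^2 * ?A 0 n) \<le> (\<Sum>n\<in>{-K..K}. (of_int n)^2 * ?A 0 n)"
      proof (intro sum_mono mult_right_mono)
        fix n
        have "rho K n \<le> of_int \<bar>n\<bar>" by (rule rho_le)
        hence "(rho K n)^2 \<le> (of_int \<bar>n\<bar>)^2" using rho_nonneg by (intro power_mono) auto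
        thus "(rho K n)^2 \<le> (of_int n)^2" by simp
      qed auto
      also have "\<dots> \<le> V0" unfolding V0_def using S0 by (intro finite_sum_le_infsum) auto
      finally show "(\<Sum>n\<in>{-K..K}. (rho K n)^2 * ?A 0 n) \<le> V0" .
    qed auto
    finally show ?thesis .
  qed
  have "(\<lambda>n. (of_int n)^2 * ?A t n) summable_on UNIV"
  proof (rule nonneg_bdd_above_summable_on)
    show "bdd_above (sum (\<lambda>n. (of_int n)^2 * ?A t n) ` {F. F \<subseteq> UNIV \<and> finite F})"
    proof (rule bdd_aboveI2)
      fix F :: "int set" assume "F \<in> {F. F \<subseteq> UNIV \<and> finite F}"
      hence F: "finite F" by simp
      define N where "N = (\<Sum>n\<in>F. \<bar>n\<bar>)"
      have N0: "N \<ge> 0" unfolding N_def by (intro sum_nonneg) auto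
      have "F \<subseteq> {-N..N}"
      proof
        fix n assume "n \<in> F"
        hence "\<bar>n\<bar> \<le> N" unfolding N_def using F by (intro member_le_sum) auto
        thus "n \<in> {-N..N}" by auto
      qed
      hence "(\<Sum>n\<in>F. (of_int n)^2 * ?A t n) \<le> (\<Sum>n\<in>{-N..N}. (of_int n)^2 * ?A t n)"
        by (intro sum_mono2) auto
      also have "\<dots> \<le> M" using bnd[OF N0] .
      finally show "(\<Sum>n\<in>F. (of_int n)^2 * ?A t n) \<le> M" .
    qed
  qed auto
  thus "finite_variance h (\<phi> t)"
    unfolding finite_variance_def eqv by (rule summable_on_cmult_right)
qed

end
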